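(* Let $t$ be a ground term (well-formed tree) over a ranked alphabet in which no node is labelled with the same unary letter as its father. Apply to $t$: the chain compression for the set of unary letters of $t$; then, for a partition $\Gamma_1,\Gamma_2$ of the set of unary letters of the resulting tree, the $(\Gamma_1,\Gamma_2)$ pair compression, yielding $t'$; then the leaf compression for $(\Gamma_{\ge 1},\Gamma_0)$, where $\Gamma_0$ is the set of constants and $\Gamma_{\ge1}$ the set of other letters of $t'$, yielding $t''$. Then for some partition $\Gamma_1,\Gamma_2$ it holds that $|t''| < \frac{3|t|}{4}$.
   Context: $|t|$ denotes the number of nodes. A tree is well-formed if each node labelled $f$ has exactly $\mathrm{ar}(f)$ ordered children; unary letters have arity $1$, constants arity $0$. For a unary letter $a$, an $a$-maximal chain is a maximal (upward and downward) sequence of nodes $v_1,\dots,v_\ell$ labelled $a$ with $v_{j+1}$ the child of $v_j$. Chain compression for $\Gamma$: simultaneously for all $a\in\Gamma$ and $\ell\ge1$, replace each $a$-maximal chain of length $\ell$ by one node labelled by a fresh unary letter $a_\ell$ (keeping the father and the child). $(\Gamma_1,\Gamma_2)$ pair compression, for disjoint sets of unary letters: every node labelled $a\in\Gamma_1$ whose child is labelled $b\in\Gamma_2$ is merged with that child into a single node labelled by a fresh unary letter $c_{ab}$; done for all such pairs simultaneously. Leaf compression for $(\Gamma_{\ge1},\Gamma_0)$: every node labelled $f\in\Gamma_{\ge1}$ of arity $m$ whose children at exactly the positions $i_1<\dots<i_\ell$ are leaves labelled by constants $a_1,\dots,a_\ell\in\Gamma_0$ is relabelled by a fresh letter $f'$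 (depending on $f,i_1,a_1,\dots,i_\ell,a_\ell$) of arity $m-\ell$ and these children are deleted; done simultaneously for all nodes. All fresh letters are new. *)

theory Defs
  imports Main
begin

datatype 'a tree = Node 'a "'a tree list"

fun root :: "'a tree \<Rightarrow> 'a" where
  "root (Node f ts) = f"

fun children :: "'a tree \<Rightarrow> 'a tree list" where
  "children (Node f ts) = ts"

fun tsize :: "'a tree \<Rightarrow> nat" where
  "tsize (Node f ts) = Suc (sum_list (map tsize ts))"

fun subtrees :: "'a tree \<Rightarrow> 'a tree set" where
  "subtrees (Node f ts) = insert (Node f ts) (\<Union>t\<in>set ts. subtrees t)"

fun wellformed :: "('a \<Rightarrow> nat) \<Rightarrow> 'a tree \<Rightarrow> bool" where
  "wellformed ar (Node f ts) = (length ts = ar f \<and> (\<forall>t\<in>set ts. wellformed ar t))"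

definition letters :: "'a tree \<Rightarrow> 'a set" where
  "letters t = root ` subtrees t"

definition unary_letters :: "('a \<Rightarrow> nat) \<Rightarrow> 'a tree \<Rightarrow> 'a set" where
  "unary_letters ar t = {f \<in> letters t. ar f = 1}"

definition constants :: "('a \<Rightarrow> nat) \<Rightarrow> 'a tree \<Rightarrow> 'a set" where
  "constants ar t = {f \<in> letters t. ar f = 0}"

definition nonconstants :: "('a \<Rightarrow> nat) \<Rightarrow> 'a tree \<Rightarrow> 'a set" where
  "nonconstants ar t = {f \<in> letters t. ar f \<ge> 1}"

definition no_unary_repeat :: "('a \<Rightarrow> nat) \<Rightarrow> 'a tree \<Rightarrow> bool" where
  "no_unary_repeat ar t =
     (\<forall>s\<in>subtrees t. ar (root s) = 1 \<longrightarrow> (\<forall>c\<in>set (children s). root c \<noteq> root s))"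

text \<open>Fresh letters are built by constructors, hence distinct from the original
  letters (Orig) and from each other: ChainL a l is a_l, PairL a b is c_ab,
  LeafL f [(i1,a1),...,(il,al)] is f' (positions counted from 0).\<close>
datatype 'a lab = Orig 'a | ChainL "'a lab" nat | PairL "'a lab" "'a lab"
  | LeafL "'a lab" "(nat \<times> 'a lab) list"

fun lar :: "('a \<Rightarrow> nat) \<Rightarrow> 'a lab \<Rightarrow> nat" where
  "lar ar (Orig f) = ar f"
| "lar ar (ChainL a l) = 1"
| "lar ar (PairL a b) = 1"
| "lar ar (LeafL f ps) = lar ar f - length ps"

fun clen :: "'b \<Rightarrow> 'b tree \<Rightarrow> nat" where
  "clen a (Node b [c]) = (if b = a then Suc (clen a c) else 0)"
| "clen a (Node b ts) = 0"

text \<open>The option argument is the label of the father if the current node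
  continues the father's chain (then it is absorbed into the chain node).\<close>
fun chain_comp' :: "'a lab set \<Rightarrow> 'a lab option \<Rightarrow> 'a lab tree \<Rightarrow> 'a lab tree" where
  "chain_comp' G p (Node f ts) =
     (case ts of
        [c] \<Rightarrow> (if f \<in> G then
                  (if p = Some f then chain_comp' G (Some f) c
                   else Node (ChainL f (clen f (Node f [c]))) [chain_comp' G (Some f) c])
                else Node f [chain_comp' G None c])
      | _ \<Rightarrow> Node f (map (chain_comp' G None) ts))"

definition chain_comp :: "'a lab set \<Rightarrow> 'a lab tree \<Rightarrow> 'a lab tree" where
  "chain_comp G t = chain_comp' G None t"

fun pair_comp :: "'a lab set \<Rightarrow> 'a lab set \<Rightarrow> 'a lab tree \<Rightarrow> 'a lab tree" where
  "pair_comp G1 G2 (Node a ts) =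
     (case ts of
        [Node b us] \<Rightarrow>
          (if a \<in> G1 \<and> b \<in> G2 then Node (PairL a b) (map (pair_comp G1 G2) us)
           else Node a [pair_comp G1 G2 (Node b us)])
      | _ \<Rightarrow> Node a (map (pair_comp G1 G2) ts))"

definition is_const_leaf :: "'b set \<Rightarrow> 'b tree \<Rightarrow> bool" where
  "is_const_leaf G0 s = (children s = [] \<and> root s \<in> G0)"

fun leaf_comp :: "'a lab set \<Rightarrow> 'a lab set \<Rightarrow> 'a lab tree \<Rightarrow> 'a lab tree" where
  "leaf_comp G1 G0 (Node f ts) =
     (let ps = [(i, root (ts ! i)). i \<leftarrow> [0..<length ts], is_const_leaf G0 (ts ! i)] in
      if f \<in> G1 \<and> ps \<noteq> [] then
        Node (LeafL f ps) (map (leaf_comp G1 G0) (filter (\<lambda>s. \<not> is_const_leaf G0 s) ts))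
      else Node f (map (leaf_comp G1 G0) ts))"

end

theory Submission
  imports Defs
begin

lemma ps_nil: "([(i, root (ts ! i)). i \<leftarrow> [0..<length ts], P (ts ! i)] = []) = (\<forall>x\<in>set ts. \<not> P x)"
proof
  assume h: "[(i, root (ts ! i)). i \<leftarrow> [0..<length ts], P (ts ! i)] = []"
  show "\<forall>x\<in>set ts. \<not> P x"
  proof
    fix x assume "x \<in> set ts"
    then obtain i where "i < length ts" "ts ! i = x" by (auto simp: in_set_conv_nth)
    then show "\<not> P x" using h by (simp add: concat_eq_Nil_conv) (metis (mono_tags, lifting) IntI atLeastLessThan_iff mem_Collect_eq UnI1 image_eqI le0 list.distinct(1))
  qed
next
  assume "\<forall>x\<in>set ts. \<not> P x"
  then show "[(i, root (ts ! i)). i \<leftarrow> [0..<length ts], P (ts ! i)] = []"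
    by (auto simp: concat_eq_Nil_conv)
qed

lemma subtrees_refl: "t \<in> subtrees t"
  by (cases t) auto

lemma subtrees_trans: "s \<in> subtrees t \<Longrightarrow> u \<in> subtrees s \<Longrightarrow> u \<in> subtrees t"
  by (induction t) auto

lemma child_subtree: assumes "s \<in> subtrees t" "c \<in> set (children s)" shows "c \<in> subtrees t"
proof (cases s)
  case (Node f ts)
  then have "c \<in> subtrees s" using assms(2) by (auto intro: subtrees_refl)
  then show ?thesis using subtrees_trans assms(1) by blast
qed

lemma finite_subtrees: "finite (subtrees t)" by (induction t) auto

lemma wf_subtree: "wellformed ar t \<Longrightarrow> s \<in> subtrees t \<Longrightarrow> wellformed ar s"
  by (induction t) auto

lemma wf_len: "wellformed ar s \<Longrightarrow> length (children s) = ar (root s)" by (cases s) auto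

lemma root_letters: "s \<in> subtrees t \<Longrightarrow> root s \<in> letters t" unfolding letters_def by auto

lemma subtrees_map: "subtrees (map_tree h t) = map_tree h ` subtrees t"
  by (induction t) auto
lemma root_map: "root (map_tree h s) = h (root s)" by (cases s) auto
lemma children_map: "children (map_tree h s) = map (map_tree h) (children s)" by (cases s) auto
lemma tsize_map: "tsize (map_tree h t) = tsize t"
proof (induction t)
  case (Node f ts)
  have "sum_list (map (tsize \<circ> map_tree h) ts) = sum_list (map tsize ts)"
    by (rule arg_cong[where f=sum_list]) (use Node in auto)
  then show ?case by simp
qed

lemma wf_map: "(\<And>f. ar' (h f) = ar f) \<Longrightarrow> wellformed ar t \<Longrightarrow> wellformed ar' (map_tree h t)"
  by (induction t) auto

lemma nur_map: "inj h \<Longrightarrow> (\<And>f. ar' (h f) = ar f) \<Longrightarrow> no_unary_repeat ar t \<Longrightarrow> no_unary_repeat ar' (map_tree h t)"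
  unfolding no_unary_repeat_def subtrees_map
  by (auto simp: root_map children_map dest: injD)

lemma letters_map: "letters (map_tree h t) = h ` letters t"
  unfolding letters_def subtrees_map by (auto simp: root_map image_image)

lemma nur_subtree: "no_unary_repeat ar t \<Longrightarrow> s \<in> subtrees t \<Longrightarrow> no_unary_repeat ar s"
  unfolding no_unary_repeat_def by (auto intro: subtrees_trans)

lemma letters_sub: "s \<in> subtrees t \<Longrightarrow> letters s \<subseteq> letters t"
  unfolding letters_def by (auto intro: subtrees_trans)

lemma clen0: "root s \<noteq> a \<Longrightarrow> clen a s = 0"
  by (induction a s rule: clen.induct) auto

definition hh :: "('a \<Rightarrow> nat) \<Rightarrow> 'a \<Rightarrow> 'a lab" where
  "hh ar f = (if ar f = 1 then ChainL (Orig f) 1 else Orig f)"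

lemma chain_map:
  assumes "wellformed ar s" "no_unary_repeat ar s" "\<forall>f\<in>letters s. (Orig f \<in> G) = (ar f = 1)"
    "p \<noteq> Some (Orig (root s))"
  shows "chain_comp' G p (map_tree Orig s) = map_tree (hh ar) s"
  using assms
proof (induction s arbitrary: p)
  case (Node f ts)
  have sub: "\<And>c. c \<in> set ts \<Longrightarrow> c \<in> subtrees (Node f ts)" by (auto intro: subtrees_refl)
  have ch: "\<And>c p. c \<in> set ts \<Longrightarrow> p \<noteq> Some (Orig (root c)) \<Longrightarrow> chain_comp' G p (map_tree Orig c) = map_tree (hh ar) c"
  proof -
    fix c p assume c: "c \<in> set ts" and p: "p \<noteq> Some (Orig (root c))"
    have "wellformed ar c" using Node.prems(1) c by simp
    moreover have "no_unary_repeat ar c" using nur_subtree[OF Node.prems(2) sub[OF c]] .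
    moreover have "\<forall>f\<in>letters c. (Orig f \<in> G) = (ar f = 1)" using Node.prems(3) letters_sub[OF sub[OF c]] by blast
    ultimately show "chain_comp' G p (map_tree Orig c) = map_tree (hh ar) c" using Node.IH[OF c] p by blast
  qed
  have fl: "f \<in> letters (Node f ts)" using root_letters[OF subtrees_refl, of "Node f ts"] by simp
  show ?case
  proof (cases ts rule: remdups_adj.cases)
    case 1
    then have "hh ar f = Orig f" using Node.prems by (simp add: hh_def)
    then show ?thesis using 1 by simp
  next
    case (2 c)
    have a1: "ar f = 1" using Node.prems 2 by simp
    have G: "Orig f \<in> G" using Node.prems(3) fl a1 by blast
    have rc: "root c \<noteq> f" using Node.prems(2) a1 2 subtrees_refl unfolding no_unary_repeat_def by fastforce
    have "clen (Orig f) (map_tree Orig c) = 0" using rc by (simp add: clen0 root_map)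
    moreover have "hh ar f = ChainL (Orig f) 1" by (simp add: hh_def a1)
    ultimately show ?thesis using Node.prems(4) 2 G a1 ch[of c "Some (Orig f)"] rc by simp
  next
    case (3 c d rest)
    have "ar f \<noteq> 1" using Node.prems 3 by simp
    then have "hh ar f = Orig f" by (simp add: hh_def)
    then show ?thesis using 3 ch[of _ None] by simp
  qed
qed


fun nleaves :: "'b tree \<Rightarrow> nat" where
  "nleaves (Node f ts) = (if ts = [] then 1 else sum_list (map nleaves ts))"

fun edges :: "'b tree \<Rightarrow> ('b \<times> 'b) list" where
  "edges (Node a ts) = (if length ts = 1 \<and> length (children (hd ts)) = 1 then [(a, root (hd ts))] else [])
     @ concat (map edges ts)"

fun ecnt :: "'b set \<Rightarrow> 'b set \<Rightarrow> 'b tree \<Rightarrow> nat" where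
  "ecnt G1 G2 (Node a ts) = (if length ts = 1 \<and> a \<in> G1 \<and> root (hd ts) \<in> G2 then 1 else 0)
     + sum_list (map (ecnt G1 G2) ts)"

lemma sum_list_plus2: "(\<forall>x\<in>set xs. f x + 2 \<le> (g x::nat)) \<Longrightarrow> sum_list (map f xs) + 2 * length xs \<le> sum_list (map g xs)"
proof (induction xs)
  case (Cons y ys)
  then have "f y + 2 \<le> g y" "sum_list (map f ys) + 2 * length ys \<le> sum_list (map g ys)" by auto
  then show ?case by simp
qed simp

lemma sum_list_lin: "sum_list (map (\<lambda>x. 4 * a x + b x) xs) = 4 * sum_list (map a xs) + sum_list (map (b::_\<Rightarrow>nat) xs)"
  by (induction xs) (simp_all add: distrib_left)

lemma size_bound: "tsize s + 3 \<le> 4 * nleaves s + length (edges s) + (if length (children s) = 1 then 1 else 0)"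
proof (induction s)
  case (Node f ts)
  show ?case
  proof (cases ts rule: remdups_adj.cases)
    case 1 then show ?thesis by simp
  next
    case (2 c)
    then show ?thesis using Node.IH[of c] by (cases "length (children c) = 1") auto
  next
    case (3 c d rest)
    have "\<forall>x\<in>set ts. tsize x + 2 \<le> 4 * nleaves x + length (edges x)"
    proof
      fix x assume "x \<in> set ts"
      from Node.IH[OF this] show "tsize x + 2 \<le> 4 * nleaves x + length (edges x)" by (simp split: if_splits)
    qed
    from sum_list_plus2[OF this] have "sum_list (map tsize ts) + 2 * length ts \<le> 4 * sum_list (map nleaves ts) + sum_list (map (length \<circ> edges) ts)"
      using sum_list_lin[of nleaves "\<lambda>x. length (edges x)" ts] by (simp add: comp_def)
    moreover have "length ts \<ge> 2" using 3 by simp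
    ultimately show ?thesis using 3 by (simp add: length_concat comp_def)
  qed
qed

lemma pc_merge: "a \<in> G1 \<and> b \<in> G2 \<Longrightarrow> pair_comp G1 G2 (Node a [Node b us]) = Node (PairL a b) (map (pair_comp G1 G2) us)"
  by simp
lemma pc_nomerge: "\<not> (a \<in> G1 \<and> b \<in> G2) \<Longrightarrow> pair_comp G1 G2 (Node a [Node b us]) = Node a [pair_comp G1 G2 (Node b us)]"
  by simp
lemma pc_other: "length ts \<noteq> 1 \<Longrightarrow> pair_comp G1 G2 (Node a ts) = Node a (map (pair_comp G1 G2) ts)"
  by (cases ts rule: remdups_adj.cases) (auto split: tree.split)
declare pair_comp.simps[simp del]

lemma ecnt_notG1: "b \<notin> G1 \<Longrightarrow> ecnt G1 G2 (Node b us) = sum_list (map (ecnt G1 G2) us)"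
  by simp

lemma pc_size: "G1 \<inter> G2 = {} \<Longrightarrow> tsize (pair_comp G1 G2 T) + ecnt G1 G2 T = tsize T"
proof (induction G1 G2 T rule: pair_comp.induct)
  case (1 G1 G2 a ts)
  show ?case
  proof (cases ts rule: remdups_adj.cases)
    case 1 then show ?thesis by (simp add: pc_other)
  next
    case (2 c)
    obtain b us where c: "c = Node b us" by (cases c)
    show ?thesis
    proof (cases "a \<in> G1 \<and> b \<in> G2")
      case True
      then have "b \<notin> G1" using "1.prems" by blast
      then have e: "ecnt G1 G2 c = sum_list (map (ecnt G1 G2) us)" using c by simp
      have "\<forall>x\<in>set us. tsize (pair_comp G1 G2 x) + ecnt G1 G2 x = tsize x"
        using "1.IH"(2)[OF 2 c] True "1.prems" by auto
      then have "sum_list (map (tsize \<circ> pair_comp G1 G2) us) + sum_list (map (ecnt G1 G2) us) = sum_list (map tsize us)"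
        by (induction us) auto
      then show ?thesis using True 2 c e by (simp add: pc_merge)
    next
      case False
      then show ?thesis using "1.IH"(3)[OF 2 c] "1.prems" 2 c by (simp add: pc_nomerge)
    qed
  next
    case (3 c d rest)
    obtain b us where c: "c = Node b us" by (cases c)
    have "\<forall>x\<in>set ts. tsize (pair_comp G1 G2 x) + ecnt G1 G2 x = tsize x"
      using "1.IH"(4)[OF 3[unfolded c] refl] "1.prems" 3 c by blast
    then have "sum_list (map (tsize \<circ> pair_comp G1 G2) ts) + sum_list (map (ecnt G1 G2) ts) = sum_list (map tsize ts)"
      by (induction ts) auto
    then show ?thesis using 3 c by (simp add: pc_other)
  qed
qed


lemma pc_leaves:
  "(\<forall>s\<in>subtrees T. root s \<in> G2 \<longrightarrow> children s \<noteq> []) \<Longrightarrow>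
   nleaves (pair_comp G1 G2 T) = nleaves T \<and> (children (pair_comp G1 G2 T) = []) = (children T = [])"
proof (induction G1 G2 T rule: pair_comp.induct)
  case (1 G1 G2 a ts)
  have sub: "\<And>c. c \<in> set ts \<Longrightarrow> \<forall>s\<in>subtrees c. root s \<in> G2 \<longrightarrow> children s \<noteq> []"
    using "1.prems" by auto
  show ?case
  proof (cases ts rule: remdups_adj.cases)
    case 1 then show ?thesis by (simp add: pc_other)
  next
    case (2 c)
    obtain b us where c: "c = Node b us" by (cases c)
    show ?thesis
    proof (cases "a \<in> G1 \<and> b \<in> G2")
      case True
      have ne: "us \<noteq> []" using "1.prems" True 2 c subtrees_refl[of c] by auto
      have "\<forall>x\<in>set us. nleaves (pair_comp G1 G2 x) = nleaves x"
        using "1.IH"(2)[OF 2 c] True sub[of c] 2 c by (auto intro: subtrees_refl)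
      then have "sum_list (map (nleaves \<circ> pair_comp G1 G2) us) = sum_list (map nleaves us)"
        by (induction us) auto
      then show ?thesis using True 2 c ne by (simp add: pc_merge)
    next
      case False
      then show ?thesis using "1.IH"(3)[OF 2 c] sub[of c] 2 c by (simp add: pc_nomerge)
    qed
  next
    case (3 c d rest)
    obtain b us where c: "c = Node b us" by (cases c)
    have "\<forall>x\<in>set ts. nleaves (pair_comp G1 G2 x) = nleaves x"
      using "1.IH"(4)[OF 3[unfolded c] refl] sub 3 c by blast
    then have "sum_list (map (nleaves \<circ> pair_comp G1 G2) ts) = sum_list (map nleaves ts)"
      by (induction ts) auto
    then show ?thesis using 3 c by (simp add: pc_other)
  qed
qed

lemma pc_wf:
  "G2 \<subseteq> {f. lar ar f = 1} \<Longrightarrow> wellformed (lar ar) T \<Longrightarrow> wellformed (lar ar) (pair_comp G1 G2 T)"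
proof (induction G1 G2 T rule: pair_comp.induct)
  case (1 G1 G2 a ts)
  show ?case
  proof (cases ts rule: remdups_adj.cases)
    case 1 then show ?thesis using "1.prems" by (simp add: pc_other)
  next
    case (2 c)
    obtain b us where c: "c = Node b us" by (cases c)
    show ?thesis
    proof (cases "a \<in> G1 \<and> b \<in> G2")
      case True
      then show ?thesis using "1.IH"(2)[OF 2 c] "1.prems" 2 c by (auto simp add: pc_merge)
    next
      case False
      then show ?thesis using "1.IH"(3)[OF 2 c] "1.prems" 2 c by (simp add: pc_nomerge)
    qed
  next
    case (3 c d rest)
    obtain b us where c: "c = Node b us" by (cases c)
    show ?thesis using "1.IH"(4)[OF 3[unfolded c] refl] "1.prems" 3 c by (simp add: pc_other)
  qed
qed

lemma edges_sub: "e \<in> set (edges T) \<Longrightarrow> \<exists>s\<in>subtrees T. \<exists>c. children s = [c] \<and> length (children c) = 1 \<and> e = (root s, root c)"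
proof (induction T)
  case (Node a ts)
  show ?case
  proof (cases "e \<in> set (concat (map edges ts))")
    case True
    then obtain x where "x \<in> set ts" "e \<in> set (edges x)" by auto
    with Node.IH show ?thesis by fastforce
  next
    case False
    then have "length ts = 1 \<and> length (children (hd ts)) = 1 \<and> e = (a, root (hd ts))"
      using Node.prems by (auto split: if_splits)
    then show ?thesis by (cases ts rule: remdups_adj.cases) (auto intro: subtrees_refl)
  qed
qed

lemma ecnt_edges:
  "(\<forall>s\<in>subtrees T. root s \<in> G2 \<longrightarrow> length (children s) = 1) \<Longrightarrow>
   ecnt G1 G2 T = length (filter (\<lambda>e. fst e \<in> G1 \<and> snd e \<in> G2) (edges T))"
proof (induction T)
  case (Node a ts)
  have ih: "\<forall>x\<in>set ts. ecnt G1 G2 x = length (filter (\<lambda>e. fst e \<in> G1 \<and> snd e \<in> G2) (edges x))"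
    using Node by auto
  then have s: "sum_list (map (ecnt G1 G2) ts) = length (filter (\<lambda>e. fst e \<in> G1 \<and> snd e \<in> G2) (concat (map edges ts)))"
    by (induction ts) auto
  have h: "(if length ts = 1 \<and> a \<in> G1 \<and> root (hd ts) \<in> G2 then 1 else 0) =
     length (filter (\<lambda>e. fst e \<in> G1 \<and> snd e \<in> G2) (if length ts = 1 \<and> length (children (hd ts)) = 1 then [(a, root (hd ts))] else []))"
  proof (cases ts rule: remdups_adj.cases)
    case (2 c)
    have "root c \<in> G2 \<longrightarrow> length (children c) = 1" using Node.prems 2 subtrees_refl[of c] by auto
    then show ?thesis using 2 by auto
  qed auto
  show ?case using s h by simp
qed

lemma leaf_lemma:
  assumes "\<forall>s\<in>subtrees t. children s \<noteq> [] \<longrightarrow> root s \<in> G1"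
    "\<forall>s\<in>subtrees t. children s = [] \<longrightarrow> root s \<in> G0" "children t \<noteq> []"
  shows "tsize (leaf_comp G1 G0 t) + nleaves t = tsize t"
  using assms
proof (induction t)
  case (Node f ts)
  have f: "f \<in> G1" using Node.prems subtrees_refl[of "Node f ts"] by fastforce
  have q: "\<forall>x\<in>set ts. is_const_leaf G0 x = (children x = [])"
  proof
    fix x assume x: "x \<in> set ts"
    have "children x = [] \<longrightarrow> root x \<in> G0" using Node.prems(2) x subtrees_refl[of x] by auto
    then show "is_const_leaf G0 x = (children x = [])" by (auto simp: is_const_leaf_def)
  qed
  have ih: "\<forall>x\<in>set ts. children x \<noteq> [] \<longrightarrow> tsize (leaf_comp G1 G0 x) + nleaves x = tsize x"
    using Node.IH Node.prems(1,2) by auto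
  have lv: "\<forall>x\<in>set ts. children x = [] \<longrightarrow> nleaves x = tsize x"
  proof (intro ballI impI)
    fix x assume "x \<in> set ts" and c: "children x = []" show "nleaves x = tsize x" using c by (cases x) simp
  qed
  have fil: "filter (\<lambda>s. \<not> is_const_leaf G0 s) ts = filter (\<lambda>x. children x \<noteq> []) ts"
    using q by (auto intro: filter_cong)
  have lc: "tsize (leaf_comp G1 G0 (Node f ts)) = Suc (sum_list (map (tsize \<circ> leaf_comp G1 G0) (filter (\<lambda>x. children x \<noteq> []) ts)))"
  proof (cases "\<forall>x\<in>set ts. \<not> is_const_leaf G0 x")
    case True
    have e: "[(i, root (ts ! i)). i \<leftarrow> [0..<length ts], is_const_leaf G0 (ts ! i)] = []" by (rule iffD2[OF ps_nil[of "is_const_leaf G0" ts] True])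
    have "filter (\<lambda>x. children x \<noteq> []) ts = ts" using True q by auto
    then show ?thesis using e by (simp add: Let_def)
  next
    case False
    then have e: "[(i, root (ts ! i)). i \<leftarrow> [0..<length ts], is_const_leaf G0 (ts ! i)] \<noteq> []" using False iffD1[OF ps_nil[of "is_const_leaf G0" ts]] by blast
    show ?thesis using e f fil by (simp add: Let_def del: leaf_comp.simps) (simp add: Let_def)
  qed
  have gen: "\<And>xs. (\<forall>x\<in>set xs. children x \<noteq> [] \<longrightarrow> tsize (leaf_comp G1 G0 x) + nleaves x = tsize x) \<Longrightarrow>
     (\<forall>x\<in>set xs. children x = [] \<longrightarrow> nleaves x = tsize x) \<Longrightarrow>
     sum_list (map (tsize \<circ> leaf_comp G1 G0) (filter (\<lambda>x. children x \<noteq> []) xs)) + sum_list (map nleaves xs) = sum_list (map tsize xs)"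
  proof -
    fix xs show "(\<forall>x\<in>set xs. children x \<noteq> [] \<longrightarrow> tsize (leaf_comp G1 G0 x) + nleaves x = tsize x) \<Longrightarrow>
     (\<forall>x\<in>set xs. children x = [] \<longrightarrow> nleaves x = tsize x) \<Longrightarrow>
     sum_list (map (tsize \<circ> leaf_comp G1 G0) (filter (\<lambda>x. children x \<noteq> []) xs)) + sum_list (map nleaves xs) = sum_list (map tsize xs)"
      by (induction xs) auto
  qed
  have "ts \<noteq> []" using Node.prems by simp
  then show ?case using lc gen[OF ih lv] by simp
qed


lemma card_cut:
  assumes "finite U" "x \<in> U" "y \<in> U" "x \<noteq> y"
  shows "4 * card {S \<in> Pow U. x \<in> S \<and> y \<notin> S} = card (Pow U)"
proof -
  have eq: "{S \<in> Pow U. x \<in> S \<and> y \<notin> S} = insert x ` Pow (U - {x,y})"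
  proof
    show "{S \<in> Pow U. x \<in> S \<and> y \<notin> S} \<subseteq> insert x ` Pow (U - {x,y})"
    proof
      fix S assume "S \<in> {S \<in> Pow U. x \<in> S \<and> y \<notin> S}"
      then have "S = insert x (S - {x})" "S - {x} \<in> Pow (U - {x,y})" by auto
      then show "S \<in> insert x ` Pow (U - {x,y})" by (metis image_eqI)
    qed
  qed (use assms in auto)
  have inj: "inj_on (insert x) (Pow (U - {x,y}))"
    by (rule inj_onI) (use insert_ident in blast)
  have c2: "card {x,y} = 2" using assms by simp
  have cd: "card (U - {x,y}) = card U - 2"
    using assms c2 by (simp add: card_Diff_subset)
  have ge: "card U \<ge> 2" using assms c2 card_mono[of U "{x,y}"] by simp
  then obtain m where m: "card U = m + 2" by (metis le_add_diff_inverse2)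
  have "card {S \<in> Pow U. x \<in> S \<and> y \<notin> S} = 2 ^ m"
    using eq card_image[OF inj] assms cd m by (simp add: card_Pow)
  then show ?thesis using m assms by (simp add: card_Pow power_add)
qed

lemma sum_cut:
  assumes "finite U" "\<forall>(x,y)\<in>set es. x \<in> U \<and> y \<in> U \<and> x \<noteq> y"
  shows "4 * (\<Sum>S\<in>Pow U. length (filter (\<lambda>e. fst e \<in> S \<and> snd e \<in> U - S) es)) = length es * card (Pow U)"
  using assms(2)
proof (induction es)
  case Nil
  then show ?case by simp
next
  case (Cons e es)
  obtain x y where e: "e = (x,y)" by (cases e)
  have xy: "x \<in> U" "y \<in> U" "x \<noteq> y" using Cons.prems e by auto
  have fin: "finite (Pow U)" using assms(1) by simp
  have "(\<Sum>S\<in>Pow U. (if x \<in> S \<and> y \<in> U - S then 1 else 0::nat)) = card {S \<in> Pow U. x \<in> S \<and> y \<in> U - S}"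
    using sum.inter_filter[OF fin, of "\<lambda>_. 1::nat" "\<lambda>S. x \<in> S \<and> y \<in> U - S"] by simp
  also have "{S \<in> Pow U. x \<in> S \<and> y \<in> U - S} = {S \<in> Pow U. x \<in> S \<and> y \<notin> S}" using xy by auto
  finally have ind: "4 * (\<Sum>S\<in>Pow U. (if x \<in> S \<and> y \<in> U - S then 1 else 0::nat)) = card (Pow U)"
    using card_cut[OF assms(1) xy] by simp
  have "(\<Sum>S\<in>Pow U. length (filter (\<lambda>e. fst e \<in> S \<and> snd e \<in> U - S) (e # es))) =
     (\<Sum>S\<in>Pow U. (if x \<in> S \<and> y \<in> U - S then 1 else 0::nat)) + (\<Sum>S\<in>Pow U. length (filter (\<lambda>e. fst e \<in> S \<and> snd e \<in> U - S) es))"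
    unfolding sum.distrib[symmetric] by (rule sum.cong) (auto simp: e)
  then show ?case using ind Cons by (simp add: distrib_left)
qed

lemma cut_exists:
  assumes "finite U" "\<forall>(x,y)\<in>set es. x \<in> U \<and> y \<in> U \<and> x \<noteq> y"
  shows "\<exists>S\<subseteq>U. length es \<le> 4 * length (filter (\<lambda>e. fst e \<in> S \<and> snd e \<in> U - S) es)"
proof (rule ccontr)
  let ?f = "\<lambda>S. length (filter (\<lambda>e. fst e \<in> S \<and> snd e \<in> U - S) es)"
  assume "\<not> ?thesis"
  then have lt: "\<And>S. S \<in> Pow U \<Longrightarrow> 4 * ?f S < length es" by auto
  have "(\<Sum>S\<in>Pow U. 4 * ?f S) < (\<Sum>S\<in>Pow U. length es)"
    by (rule sum_strict_mono) (use assms(1) lt in auto)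
  then have "4 * (\<Sum>S\<in>Pow U. ?f S) < length es * card (Pow U)"
    by (simp add: sum_distrib_left mult.commute)
  then show False using sum_cut[OF assms] by simp
qed


lemma main_lemma:
  fixes T :: "'a lab tree"
  assumes wf: "wellformed (lar ar) T" and nur: "no_unary_repeat (lar ar) T" and sz: "tsize T \<ge> 2"
  shows "\<exists>G1 G2. G1 \<inter> G2 = {} \<and> G1 \<union> G2 = unary_letters (lar ar) T \<and>
      (let t' = pair_comp G1 G2 T;
           t'' = leaf_comp (nonconstants (lar ar) t') (constants (lar ar) t') t'
       in 4 * tsize t'' < 3 * tsize T)"
proof -
  let ?U = "unary_letters (lar ar) T"
  let ?es = "edges T"
  have wfs: "\<And>s. s \<in> subtrees T \<Longrightarrow> length (children s) = lar ar (root s)"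
    using wf wf_subtree wf_len by blast
  have finU: "finite ?U"
    unfolding unary_letters_def letters_def using finite_subtrees[of T] by simp
  have ep: "\<forall>(x,y)\<in>set ?es. x \<in> ?U \<and> y \<in> ?U \<and> x \<noteq> y"
  proof (intro ballI, clarify)
    fix x y assume "(x,y) \<in> set ?es"
    then obtain s c where s: "s \<in> subtrees T" "children s = [c]" "length (children c) = 1" "(x,y) = (root s, root c)"
      using edges_sub by blast
    have c: "c \<in> subtrees T" using child_subtree[OF s(1)] s(2) by simp
    have "lar ar (root s) = 1" using wfs[OF s(1)] s(2) by simp
    moreover have "lar ar (root c) = 1" using wfs[OF c] s(3) by simp
    moreover have "root c \<noteq> root s" using nur s(1,2) calculation unfolding no_unary_repeat_def by auto
    ultimately show "x \<in> ?U \<and> y \<in> ?U \<and> x \<noteq> y"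
      using s root_letters[OF s(1)] root_letters[OF c] unfolding unary_letters_def by auto
  qed
  obtain S where S: "S \<subseteq> ?U" "length ?es \<le> 4 * length (filter (\<lambda>e. fst e \<in> S \<and> snd e \<in> ?U - S) ?es)"
    using cut_exists[OF finU ep] by blast
  define G1 where "G1 = S"
  define G2 where "G2 = ?U - S"
  have disj: "G1 \<inter> G2 = {}" and un: "G1 \<union> G2 = ?U" using S unfolding G1_def G2_def by auto
  have H2: "\<forall>s\<in>subtrees T. root s \<in> G2 \<longrightarrow> length (children s) = 1"
    using wfs unfolding G2_def unary_letters_def by auto
  have G2u: "G2 \<subseteq> {f. lar ar f = 1}" unfolding G2_def unary_letters_def by auto
  have ec: "ecnt G1 G2 T = length (filter (\<lambda>e. fst e \<in> G1 \<and> snd e \<in> G2) ?es)"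
    using ecnt_edges[OF H2] .
  have E: "length ?es \<le> 4 * ecnt G1 G2 T" using S(2) ec unfolding G1_def G2_def by simp
  define t' where "t' = pair_comp G1 G2 T"
  define t'' where "t'' = leaf_comp (nonconstants (lar ar) t') (constants (lar ar) t') t'"
  have s1: "tsize t' + ecnt G1 G2 T = tsize T" using pc_size[OF disj] unfolding t'_def .
  have chT: "children T \<noteq> []" using sz by (cases T) auto
  have "\<forall>s\<in>subtrees T. root s \<in> G2 \<longrightarrow> children s \<noteq> []" using H2 by auto
  from pc_leaves[OF this] have nl: "nleaves t' = nleaves T" and cht: "children t' \<noteq> []"
    using chT unfolding t'_def by auto
  have wft: "wellformed (lar ar) t'" using pc_wf[OF G2u wf] unfolding t'_def .
  have wfs': "\<And>s. s \<in> subtrees t' \<Longrightarrow> length (children s) = lar ar (root s)"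
    using wft wf_subtree wf_len by blast
  have h1: "\<forall>s\<in>subtrees t'. children s \<noteq> [] \<longrightarrow> root s \<in> nonconstants (lar ar) t'"
  proof (intro ballI impI)
    fix s assume s: "s \<in> subtrees t'" "children s \<noteq> []"
    then show "root s \<in> nonconstants (lar ar) t'" using wfs'[OF s(1)] root_letters[OF s(1)]
      unfolding nonconstants_def by (cases "children s") auto
  qed
  have h0: "\<forall>s\<in>subtrees t'. children s = [] \<longrightarrow> root s \<in> constants (lar ar) t'"
  proof (intro ballI impI)
    fix s assume s: "s \<in> subtrees t'" "children s = []"
    then show "root s \<in> constants (lar ar) t'" using wfs'[OF s(1)] root_letters[OF s(1)]
      unfolding constants_def by auto
  qed
  have s2: "tsize t'' + nleaves t' = tsize t'" using leaf_lemma[OF h1 h0 cht] unfolding t''_def .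
  have sb: "tsize T + 3 \<le> 4 * nleaves T + length ?es + 1"
    using size_bound[of T] by (simp split: if_splits)
  have "4 * tsize t'' < 3 * tsize T" using s1 s2 nl sb E by linarith
  then show ?thesis using disj un unfolding t''_def t'_def Let_def by blast
qed

theorem lemma2p3:
  fixes ar :: "'a \<Rightarrow> nat" and t :: "'a tree"
  assumes "wellformed ar t"
    and "no_unary_repeat ar t"
    and "tsize t \<ge> 2"
  shows "let t0 = map_tree Orig t;
             tc = chain_comp (unary_letters (lar ar) t0) t0
         in \<exists>G1 G2. G1 \<inter> G2 = {} \<and> G1 \<union> G2 = unary_letters (lar ar) tc \<and>
              (let t' = pair_comp G1 G2 tc;
                   t'' = leaf_comp (nonconstants (lar ar) t') (constants (lar ar) t') t'
               in 4 * tsize t'' < 3 * tsize t)"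
proof -
  let ?G = "unary_letters (lar ar) (map_tree Orig t)"
  have lt: "\<forall>f\<in>letters t. (Orig f \<in> ?G) = (ar f = 1)"
    unfolding unary_letters_def letters_map by auto
  have tc: "chain_comp ?G (map_tree Orig t) = map_tree (hh ar) t"
    unfolding chain_comp_def using chain_map[OF assms(1,2) lt] by simp
  have ar': "\<And>f. lar ar (hh ar f) = ar f" by (simp add: hh_def)
  have inj: "inj (hh ar)" by (rule injI) (auto simp: hh_def split: if_splits)
  have wf: "wellformed (lar ar) (map_tree (hh ar) t)" using wf_map[of "lar ar" "hh ar" ar, OF ar' assms(1)] .
  have nur: "no_unary_repeat (lar ar) (map_tree (hh ar) t)" using nur_map[OF inj, of "lar ar" ar, OF ar' assms(2)] .
  have sz: "tsize (map_tree (hh ar) t) = tsize t" by (rule tsize_map)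
  show ?thesis using main_lemma[OF wf nur] sz assms(3) tc unfolding Let_def by simp
qed

end
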